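(* Let $p\ge1$ and $T\in\mathbb{N}$. The equispaced configuration $\mathbf{X}^{\mathrm{eq}}=\mathbb{Z}$ is, up to translations, the unique minimiser of $\mathcal{F}^0_p$ in $\mathbb{X}_T$.
   Context: One-dimensional setting. Let $T\in\mathbb{N}$. A configuration is a set $\mathbf{X}=\bigcup_{k\in\mathbb{Z}}(\bar{\mathbf{X}}+kT)$ with $\bar{\mathbf{X}}=(x_1,\dots,x_T)\in[0,T)^T$, $x_i\le x_j$ for $i<j$ (points counted with multiplicity); $\mathbb{X}_T$ is the set of configurations. Translations: $\mathbf{X}+a=\{x+a:x\in\mathbf{X}\}$. For $\mathbf{X}\in\mathbb{X}_T$, $u[\mathbf{X}]$ is the $T$-periodic function (defined up to an additive constant) with distributional derivative $\mathrm{D}u[\mathbf{X}]=\mathcal{L}^1-\sum_{x\in\mathbf{X}}\delta_x$ (multiplicities counted). $\mathcal{F}^0_p[\mathbf{X}]=\int_0^T\int_0^T|u[\mathbf{X}](x)-u[\mathbf{X}](y)|^p\,\mathrm{d}y\,\mathrm{d}x$. *)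

theory Defs
  imports "HOL-Analysis.Analysis"
begin

text \<open>A configuration in X_T is encoded by its representatives
  x 0 \<le> x 1 \<le> ... \<le> x (T-1) in [0,T); the configuration itself is
  the multiset of points x i + k T (i < T, k integer).\<close>

definition is_config :: "nat \<Rightarrow> (nat \<Rightarrow> real) \<Rightarrow> bool" where
  "is_config T x \<longleftrightarrow> (\<forall>i<T. 0 \<le> x i \<and> x i < real T) \<and>
     (\<forall>i j. i \<le> j \<and> j < T \<longrightarrow> x i \<le> x j)"

definition conf_count :: "nat \<Rightarrow> (nat \<Rightarrow> real) \<Rightarrow> real \<Rightarrow> nat" where
  "conf_count T x y = card {(i::nat, k::int). i < T \<and> x i + of_int k * real T = y}"

definition conf_translate_eq :: "nat \<Rightarrow> (nat \<Rightarrow> real) \<Rightarrow> (nat \<Rightarrow> real) \<Rightarrow> real \<Rightarrow> bool" where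
  "conf_translate_eq T x z a \<longleftrightarrow> (\<forall>y. conf_count T x y = conf_count T z (y - a))"

definition eq_config :: "nat \<Rightarrow> real" where
  "eq_config i = real i"

text \<open>u[X]: T-periodic, with distributional derivative Lebesgue minus the sum of
  Dirac masses at the points of X (with multiplicity); fixed up to an additive
  constant, which does not affect the energy.\<close>
definition u_conf :: "nat \<Rightarrow> (nat \<Rightarrow> real) \<Rightarrow> real \<Rightarrow> real" where
  "u_conf T x t = t - (\<Sum>i<T. of_int \<lfloor>(t - x i) / real T\<rfloor>)"

definition F0 :: "real \<Rightarrow> nat \<Rightarrow> (nat \<Rightarrow> real) \<Rightarrow> real" where
  "F0 p T x = (LBINT s=0..real T. (LBINT t=0..real T. \<bar>u_conf T x s - u_conf T x t\<bar> powr p))"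

end

theory Submission
  imports Defs
begin


lemma powr_convex0:
  assumes p: "(p::real) \<ge> 1" shows "convex_on {0..} (\<lambda>x::real. x powr p)"
proof (rule convex_onI)
  show "convex {0::real..}" by simp
  fix t x y :: real assume t: "0 < t" "t < 1" and x: "x \<in> {0..}" and y: "y \<in> {0..}"
  show "((1 - t) *\<^sub>R x + t *\<^sub>R y) powr p \<le> (1 - t) * x powr p + t * y powr p"
  proof (cases "x = 0 \<or> y = 0")
    case True
    have aux: "\<And>c z::real. 0 \<le> c \<Longrightarrow> c \<le> 1 \<Longrightarrow> 0 \<le> z \<Longrightarrow> (c * z) powr p \<le> c * z powr p"
    proof -
      fix c z :: real assume c: "0 \<le> c" "c \<le> 1" "0 \<le> z"
      have "(c * z) powr p = c powr p * z powr p" using c by (simp add: powr_mult)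
      also have "c powr p \<le> c powr 1" using c p powr_mono'[of 1 p c]
        by (cases "c = 0") auto
      hence "c powr p * z powr p \<le> c * z powr p" using c by (auto intro: mult_right_mono)
      finally show "(c * z) powr p \<le> c * z powr p" .
    qed
    show ?thesis using True
    proof
      assume "x = 0" thus ?thesis using aux[of t y] t y p by simp
    next
      assume "y = 0" thus ?thesis using aux[of "1-t" x] t x p by simp
    qed
  next
    case False
    hence "x \<in> {0<..}" "y \<in> {0<..}" using x y by auto
    thus ?thesis using convex_onD[OF powr_convex[OF p], of t x y] t by simp
  qed
qed

lemma psi_convex:
  assumes p: "(p::real) \<ge> 1" shows "convex_on UNIV (\<lambda>y::real. \<bar>y - a\<bar> powr p)"
proof (rule convex_onI)
  show "convex (UNIV::real set)" by simp
  fix t x y :: real assume t: "0 < t" "t < 1"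
  have "\<bar>(1 - t) *\<^sub>R x + t *\<^sub>R y - a\<bar> \<le> (1 - t) * \<bar>x - a\<bar> + t * \<bar>y - a\<bar>"
  proof -
    have "(1 - t) *\<^sub>R x + t *\<^sub>R y - a = (1 - t) * (x - a) + t * (y - a)" by (simp add: algebra_simps)
    also have "\<bar>\<dots>\<bar> \<le> \<bar>(1 - t) * (x - a)\<bar> + \<bar>t * (y - a)\<bar>" by (rule abs_triangle_ineq)
    also have "\<dots> = (1 - t) * \<bar>x - a\<bar> + t * \<bar>y - a\<bar>" using t by (simp add: abs_mult)
    finally show ?thesis .
  qed
  hence "\<bar>(1 - t) *\<^sub>R x + t *\<^sub>R y - a\<bar> powr p \<le> ((1 - t) * \<bar>x - a\<bar> + t * \<bar>y - a\<bar>) powr p"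
    using p by (intro powr_mono2) auto
  also have "\<dots> \<le> (1 - t) * \<bar>x - a\<bar> powr p + t * \<bar>y - a\<bar> powr p"
    using convex_onD[OF powr_convex0[OF p], of t "\<bar>x - a\<bar>" "\<bar>y - a\<bar>"] t by simp
  finally show "\<bar>(1 - t) *\<^sub>R x + t *\<^sub>R y - a\<bar> powr p \<le> (1 - t) * \<bar>x - a\<bar> powr p + t * \<bar>y - a\<bar> powr p" .
qed

lemma chord_int:
  fixes f :: "real \<Rightarrow> real" and m :: int
  assumes f: "convex_on UNIV f"
  shows "f (of_int m) \<ge> f 0 + of_int m * (f 1 - f 0)"
proof -
  consider "m = 0" | "m = 1" | "m \<ge> 2" | "m \<le> -1" by linarith
  thus ?thesis
  proof cases
    case 3
    define M where "M = real_of_int m"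
    have M: "M \<ge> 2" using 3 by (simp add: M_def)
    have "f ((1 - 1/M) * 0 + (1/M) * M) \<le> (1 - 1/M) * f 0 + (1/M) * f M"
      using convex_onD[OF f, of "1/M" 0 M] M by simp
    hence "f 1 \<le> (1 - 1/M) * f 0 + (1/M) * f M" using M by simp
    hence "M * f 1 \<le> M * ((1 - 1/M) * f 0 + (1/M) * f M)" using M by simp
    hence "M * f 1 \<le> (M - 1) * f 0 + f M" using M by (simp add: algebra_simps)
    thus ?thesis unfolding M_def[symmetric] by (simp add: algebra_simps)
  next
    case 4
    define M where "M = real_of_int m"
    have M: "M \<le> -1" using 4 by (simp add: M_def)
    define mu where "mu = 1 / (1 - M)"
    have mu: "0 < mu" "mu < 1" using M by (auto simp: mu_def field_simps)
    have eq0: "(1 - mu) * 1 + mu * M = 0" using M by (simp add: mu_def field_simps)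
    have "f ((1 - mu) * 1 + mu * M) \<le> (1 - mu) * f 1 + mu * f M"
      using convex_onD[OF f, of mu 1 M] mu by simp
    hence "f 0 \<le> (1 - mu) * f 1 + mu * f M" using eq0 by simp
    hence le1: "(1 - M) * f 0 \<le> (1 - M) * ((1 - mu) * f 1 + mu * f M)" using M by simp
    have e1: "(1 - M) * (1 - mu) = - M" "(1 - M) * mu = 1" using M by (simp_all add: mu_def field_simps)
    have "(1 - M) * ((1 - mu) * f 1 + mu * f M) = ((1 - M) * (1 - mu)) * f 1 + ((1 - M) * mu) * f M"
      by (simp add: algebra_simps)
    also have "\<dots> = (- M) * f 1 + f M" using e1 by simp
    finally have "(1 - M) * f 0 \<le> (- M) * f 1 + f M" using le1 by simp
    thus ?thesis unfolding M_def[symmetric] by (simp add: algebra_simps)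
  qed auto
qed


lemma bm_bounded_set_integrable:
  fixes f :: "real \<Rightarrow> real"
  assumes [measurable]: "f \<in> borel_measurable borel" and bnd: "\<And>x. x \<in> {a..b} \<Longrightarrow> \<bar>f x\<bar> \<le> B"
  shows "set_integrable lborel {a..b} f"
  unfolding set_integrable_def
  by (rule integrableI_bounded_set_indicator[where B=B]) (auto simp: bnd emeasure_lborel_Icc_eq)

lemma bm_bounded_integrable_on:
  fixes f :: "real \<Rightarrow> real"
  assumes "f \<in> borel_measurable borel" and "\<And>x. x \<in> {a..b} \<Longrightarrow> \<bar>f x\<bar> \<le> B"
  shows "f integrable_on {a..b}"
  using set_borel_integral_eq_integral(1)[OF bm_bounded_set_integrable[OF assms]] .

lemma bm_bounded_LBINT:
  fixes f :: "real \<Rightarrow> real"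
  assumes "f \<in> borel_measurable borel" and "\<And>x. x \<in> {a..b} \<Longrightarrow> \<bar>f x\<bar> \<le> B" and "a \<le> b"
  shows "(LBINT x=a..b. f x) = integral {a..b} f"
  using interval_integral_eq_integral[OF assms(3) bm_bounded_set_integrable[OF assms(1,2)]] .

lemma periodic_int:
  fixes f :: "real \<Rightarrow> 'a" and T :: real
  assumes per: "\<And>x. f (x + T) = f x"
  shows "f (x + of_int k * T) = f x"
proof (induction k arbitrary: x rule: int_induct[where k=0])
  case base thus ?case by simp
next
  case (step1 i) thus ?case using per[of "x + of_int i * T"] by (simp add: algebra_simps)
next
  case (step2 i)
  have "f (x + of_int (i - 1) * T) = f (x + of_int (i - 1) * T + T)" using per by simp
  also have "\<dots> = f (x + of_int i * T)" by (simp add: algebra_simps)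
  finally show ?case using step2 by simp
qed

lemma periodic_integral_shift:
  fixes f :: "real \<Rightarrow> real" and T :: real
  assumes T: "T > 0" and per: "\<And>x. f (x + T) = f x"
    and int: "\<And>a b. f integrable_on {a..b}"
  shows "integral {c..c+T} f = integral {0..T} f"
proof -
  define k where "k = \<lfloor>c / T\<rfloor>"
  define c' where "c' = c - of_int k * T"
  have c'0: "0 \<le> c'" "c' \<le> T"
  proof -
    have "of_int k \<le> c / T" "c / T < of_int k + 1" unfolding k_def by linarith+
    hence "of_int k * T \<le> c" "c < (of_int k + 1) * T" using T by (auto simp: field_simps)
    thus "0 \<le> c'" "c' \<le> T" unfolding c'_def by (auto simp: algebra_simps)
  qed
  have fk: "f \<circ> (+) (of_int k * T) = f"
    by (rule ext) (simp add: periodic_int[of f T, OF per] add.commute)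
  have "integral {c'..c'+T} f = integral {c'..c'+T} (f \<circ> (+) (of_int k * T))" by (simp add: fk)
  also have "\<dots> = integral {c..c+T} f"
    by (subst integral_shift_Icc_real) (simp add: c'_def algebra_simps)
  finally have 1: "integral {c..c+T} f = integral {c'..c'+T} f" by simp
  have fT: "f \<circ> (+) T = f" by (rule ext) (simp add: per add.commute)
  have "integral {c'..c'+T} f = integral {c'..T} f + integral {T..c'+T} f"
    using c'0 Henstock_Kurzweil_Integration.integral_combine[where a=c' and c=T and b="c'+T" and f=f] int by simp
  also have "integral {T..c'+T} f = integral {0..c'} (f \<circ> (+) T)"
    by (subst integral_shift_Icc_real) (simp add: algebra_simps)
  also have "\<dots> = integral {0..c'} f" by (simp add: fT)
  also have "integral {c'..T} f + integral {0..c'} f = integral {0..T} f"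
    using c'0 Henstock_Kurzweil_Integration.integral_combine[where a=0 and c=c' and b=T and f=f] int by simp
  finally show ?thesis using 1 by simp
qed

lemma periodic_integral_shift':
  fixes f :: "real \<Rightarrow> real" and T :: real
  assumes T: "T > 0" and per: "\<And>x. f (x + T) = f x"
    and int: "\<And>a b. f integrable_on {a..b}"
  shows "integral {0..T} (\<lambda>t. f (t + c)) = integral {0..T} f"
proof -
  have "integral {0..T} (\<lambda>t. f (t + c)) = integral {0..T} (f \<circ> (+) c)"
    by (simp add: o_def add.commute)
  also have "\<dots> = integral {c..c+T} f"
    by (subst integral_shift_Icc_real) (simp add: algebra_simps)
  also have "\<dots> = integral {0..T} f" by (rule periodic_integral_shift[OF T per int])
  finally show ?thesis .
qed


definition beta :: "real \<Rightarrow> real \<Rightarrow> real" where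
  "beta p h = (1 - frac h) powr p - frac h powr p"
definition A0 :: "real \<Rightarrow> real \<Rightarrow> real" where
  "A0 p h = frac h powr p - beta p h * of_int \<lfloor>h\<rfloor>"
definition Lr :: "real \<Rightarrow> real \<Rightarrow> real \<Rightarrow> real" where
  "Lr p h y = A0 p h + beta p h * y"
definition Dfl :: "nat \<Rightarrow> real \<Rightarrow> real \<Rightarrow> real" where
  "Dfl T r h = real_of_int (\<lfloor>(r + h) / real T\<rfloor> - \<lfloor>r / real T\<rfloor>)"
definition Nr :: "nat \<Rightarrow> (nat \<Rightarrow> real) \<Rightarrow> real \<Rightarrow> real \<Rightarrow> real" where
  "Nr T x s h = u_conf T x s - u_conf T x (s + h) + h"

lemma Nr_sum: "Nr T x s h = (\<Sum>i<T. Dfl T (s - x i) h)"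
  unfolding Nr_def u_conf_def Dfl_def
  by (simp add: sum_subtractf algebra_simps diff_divide_distrib add_divide_distrib)

lemma Nr_int: "Nr T x s h = of_int (\<Sum>i<T. \<lfloor>(s - x i + h) / real T\<rfloor> - \<lfloor>(s - x i) / real T\<rfloor>)"
  unfolding Nr_sum Dfl_def by simp

lemma u_per: assumes "T \<ge> 1" shows "u_conf T x (t + real T) = u_conf T x t"
proof -
  have "\<lfloor>(t + real T - x i) / real T\<rfloor> = \<lfloor>(t - x i) / real T\<rfloor> + 1" for i
  proof -
    have "(t + real T - x i) / real T = (t - x i) / real T + 1" using assms by (simp add: field_simps)
    thus ?thesis by simp
  qed
  thus ?thesis unfolding u_conf_def by (simp add: sum.distrib)
qed

lemma u_bound: assumes "T \<ge> 1" shows "\<bar>u_conf T x s - u_conf T x t\<bar> \<le> real T"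
proof -
  define S where "S = (\<Sum>i<T. x i) / real T"
  have bnd: "S \<le> u_conf T x t \<and> u_conf T x t \<le> S + real T" for t
  proof -
    have eq: "(\<Sum>i<T. (t - x i) / real T) = t - S"
      using assms by (simp add: S_def sum_subtractf sum_divide_distrib[symmetric] diff_divide_distrib)
    have l: "(\<Sum>i<T. of_int \<lfloor>(t - x i) / real T\<rfloor>) \<le> (\<Sum>i<T. (t - x i) / real T)"
      by (intro sum_mono) simp
    have r: "(\<Sum>i<T. ((t - x i) / real T - 1)) \<le> (\<Sum>i<T. of_int \<lfloor>(t - x i) / real T\<rfloor>)"
      by (intro sum_mono) linarith
    have r2: "(\<Sum>i<T. ((t - x i) / real T - 1)) = t - S - real T"
      using eq by (simp add: sum_subtractf)
    show ?thesis using l r r2 eq unfolding u_conf_def by simp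
  qed
  show ?thesis using bnd[of s] bnd[of t] by linarith
qed

lemma Nr_per: assumes "T \<ge> 1" shows "Nr T x (s + real T) h = Nr T x s h"
  unfolding Nr_def using u_per[OF assms, of x s] u_per[OF assms, of x "s + h"]
  by (simp add: add.commute add.left_commute)

lemma Dfl_per: assumes "T \<ge> 1" shows "Dfl T (r + real T) h = Dfl T r h"
proof -
  have a: "(r + real T + h) / real T = (r + h) / real T + 1" using assms by (simp add: field_simps)
  have b: "(r + real T) / real T = r / real T + 1" using assms by (simp add: field_simps)
  show ?thesis unfolding Dfl_def a b by simp
qed

lemma Dfl_bound: assumes "T \<ge> 1" "0 \<le> h" "h \<le> real T" shows "0 \<le> Dfl T r h \<and> Dfl T r h \<le> 1"
proof -
  have T0: "real T > 0" using assms by simp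
  have e: "(r + h) / real T = r / real T + h / real T" by (simp add: add_divide_distrib)
  have h1: "0 \<le> h / real T" "h / real T \<le> 1" using assms T0 by (simp_all add: divide_le_eq_1)
  have "\<lfloor>r / real T\<rfloor> \<le> \<lfloor>(r + h) / real T\<rfloor>" unfolding e using h1 by (intro floor_mono) linarith
  moreover have "\<lfloor>(r + h) / real T\<rfloor> \<le> \<lfloor>r / real T + 1\<rfloor>" unfolding e using h1 by (intro floor_mono) linarith
  ultimately show ?thesis unfolding Dfl_def by simp
qed

lemma frac_powr_bounds: fixes p h :: real assumes "p \<ge> 1" shows "0 \<le> frac h powr p" "frac h powr p \<le> 1"
  "0 \<le> (1 - frac h) powr p" "(1 - frac h) powr p \<le> 1"
proof -
  have f: "0 \<le> frac h" "frac h < 1" by (simp_all add: frac_lt_1)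
  show "0 \<le> frac h powr p" by simp
  show "0 \<le> (1 - frac h) powr p" by simp
  show "frac h powr p \<le> 1" using f assms by (intro powr_le1) auto
  show "(1 - frac h) powr p \<le> 1" using f assms by (intro powr_le1) auto
qed

lemma beta_bound: assumes "p \<ge> 1" shows "\<bar>beta p h\<bar> \<le> 1"
  using frac_powr_bounds[OF assms, of h] unfolding beta_def by linarith

lemma Lr_alt: "Lr p h y = frac h powr p + beta p h * (y - of_int \<lfloor>h\<rfloor>)"
  unfolding Lr_def A0_def by (simp add: algebra_simps)

lemma Lr_le: assumes p: "p \<ge> 1" shows "Lr p h (of_int n) \<le> \<bar>h - of_int n\<bar> powr p"
proof -
  define a where "a = frac h"
  define psi where "psi = (\<lambda>y::real. \<bar>y - a\<bar> powr p)"
  have cv: "convex_on UNIV psi" unfolding psi_def by (rule psi_convex[OF p])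
  have ch: "psi (of_int (n - \<lfloor>h\<rfloor>)) \<ge> psi 0 + of_int (n - \<lfloor>h\<rfloor>) * (psi 1 - psi 0)"
    by (rule chord_int[OF cv])
  have a0: "0 \<le> a" "a < 1" by (simp_all add: a_def frac_lt_1)
  have "psi (of_int (n - \<lfloor>h\<rfloor>)) = \<bar>h - of_int n\<bar> powr p"
    unfolding psi_def a_def frac_def by (simp add: abs_minus_commute)
  moreover have "psi 0 = frac h powr p" "psi 1 = (1 - frac h) powr p"
    using a0 unfolding psi_def by (simp_all add: a_def)
  ultimately show ?thesis using ch unfolding Lr_alt beta_def by (simp add: algebra_simps)
qed

lemma Lr_eq: assumes "n = \<lfloor>h\<rfloor> \<or> n = \<lfloor>h\<rfloor> + 1"
  shows "Lr p h (of_int n) = \<bar>h - of_int n\<bar> powr p"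
  using assms
proof
  assume "n = \<lfloor>h\<rfloor>" thus ?thesis unfolding Lr_alt by (simp add: frac_def)
next
  assume n: "n = \<lfloor>h\<rfloor> + 1"
  have "\<bar>h - of_int n\<bar> = 1 - frac h" using n frac_lt_1[of h] by (simp add: frac_def)
  hence e: "\<bar>h - of_int n\<bar> powr p = (1 - frac h) powr p" by simp
  have "Lr p h (of_int n) = (1 - frac h) powr p" unfolding Lr_alt beta_def using n by simp
  thus ?thesis using e by simp
qed

lemma Lr_strict: assumes p: "p \<ge> 1" and h: "3/4 \<le> h" "h < 1" and n: "n \<ge> 2"
  shows "Lr p h (of_int n) + 1/2 \<le> \<bar>h - of_int n\<bar> powr p"
proof -
  have fl: "\<lfloor>h\<rfloor> = 0" using h by (simp add: floor_eq_iff)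
  hence fr: "frac h = h" by (simp add: frac_def)
  have b: "beta p h \<le> 0" unfolding beta_def fr using h p by (intro diff_le_0_iff_le[THEN iffD2] powr_mono2) auto
  have "Lr p h (of_int n) = h powr p + beta p h * of_int n" unfolding Lr_alt fl fr by simp
  also have "\<dots> \<le> h powr p + beta p h * 2" using b n by (simp add: mult_left_mono_neg)
  also have "\<dots> = 2 * (1 - h) powr p - h powr p" unfolding beta_def fr by simp
  also have "\<dots> \<le> 2 * (1 - h) powr p" by simp
  finally have L0: "Lr p h (of_int n) \<le> 2 * (1 - h) powr p" .
  have "(1 - h) powr p \<le> (1 - h) powr 1" using h p by (intro powr_mono') auto
  hence "(1 - h) powr p \<le> 1 - h" using h by simp
  hence L: "Lr p h (of_int n) \<le> 1/2" using h L0 by linarith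
  have "\<bar>h - of_int n\<bar> = of_int n - h" using h n by simp
  moreover have "of_int n - h \<ge> 1" using h n by simp
  hence "(of_int n - h) powr 1 \<le> (of_int n - h) powr p" using p by (intro powr_mono) auto
  ultimately have "1 \<le> \<bar>h - of_int n\<bar> powr p" using \<open>of_int n - h \<ge> 1\<close> by simp
  thus ?thesis using L by simp
qed


lemma integral_abs_bound:
  fixes f :: "real \<Rightarrow> real"
  assumes "f integrable_on {a..b}" "a \<le> b" "\<And>x. x \<in> {a..b} \<Longrightarrow> \<bar>f x\<bar> \<le> B"
  shows "\<bar>integral {a..b} f\<bar> \<le> B * (b - a)"
proof -
  have "integral {a..b} f \<le> integral {a..b} (\<lambda>_. B)"
    using assms by (intro integral_le) (auto simp: abs_le_iff)
  moreover have lb: "\<And>x. x \<in> {a..b} \<Longrightarrow> - B \<le> f x" using assms(3) by (metis abs_le_iff minus_le_iff)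
  have "integral {a..b} (\<lambda>_. - B) \<le> integral {a..b} f"
    using assms(1) lb by (intro integral_le) auto
  ultimately show ?thesis using assms(2) by (simp add: abs_le_iff algebra_simps)
qed

definition Phi :: "real \<Rightarrow> nat \<Rightarrow> real \<Rightarrow> real" where
  "Phi p T r = (LBINT h=0..real T. beta p h * Dfl T r h)"

definition Cst :: "real \<Rightarrow> nat \<Rightarrow> real" where
  "Cst p T = real T * integral {0..real T} (A0 p) + real T * integral {0..real T} (Phi p T)"

definition Iu :: "real \<Rightarrow> nat \<Rightarrow> (nat \<Rightarrow> real) \<Rightarrow> real \<Rightarrow> real" where
  "Iu p T x s = (LBINT t=0..real T. \<bar>u_conf T x s - u_conf T x t\<bar> powr p)"

definition Ju :: "real \<Rightarrow> nat \<Rightarrow> (nat \<Rightarrow> real) \<Rightarrow> real \<Rightarrow> real" where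
  "Ju p T x s = (LBINT h=0..real T. Lr p h (Nr T x s h))"

lemma u_meas2[measurable]: "(\<lambda>t. u_conf T x (f t)) \<in> borel_measurable M" if [measurable]: "f \<in> borel_measurable M"
  unfolding u_conf_def by measurable

lemma Iu_meas[measurable]: "Iu p T x \<in> borel_measurable borel"
  unfolding Iu_def interval_lebesgue_integral_def set_lebesgue_integral_def
  by measurable

lemma Ju_meas[measurable]: "Ju p T x \<in> borel_measurable borel"
  unfolding Ju_def interval_lebesgue_integral_def set_lebesgue_integral_def Lr_def A0_def beta_def Nr_def frac_def
  by measurable

lemma Phi_meas[measurable]: "Phi p T \<in> borel_measurable borel"
  unfolding Phi_def interval_lebesgue_integral_def set_lebesgue_integral_def beta_def Dfl_def frac_def
  by measurable

lemma A0_meas[measurable]: "A0 p \<in> borel_measurable borel"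
  unfolding A0_def beta_def frac_def by measurable



context
  fixes T :: nat and x :: "nat \<Rightarrow> real" and p :: real
  assumes T1: "T \<ge> 1" and p1: "p \<ge> 1"
begin

lemma T0: "real T > 0" using T1 by simp

lemma g_bound: "\<bar>\<bar>u_conf T x s - u_conf T x t\<bar> powr p\<bar> \<le> real T powr p"
  using u_bound[OF T1, of x s t] p1 by (simp add: powr_mono2)

lemma g_int: "(\<lambda>t. \<bar>u_conf T x s - u_conf T x t\<bar> powr p) integrable_on {a..b}"
  by (rule bm_bounded_integrable_on[OF _ g_bound]) measurable

lemma Iu_integral: "Iu p T x s = integral {0..real T} (\<lambda>t. \<bar>u_conf T x s - u_conf T x t\<bar> powr p)"
proof -
  have "(LBINT t=ereal 0..ereal (real T). \<bar>u_conf T x s - u_conf T x t\<bar> powr p)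
     = integral {0..real T} (\<lambda>t. \<bar>u_conf T x s - u_conf T x t\<bar> powr p)"
    by (rule bm_bounded_LBINT[OF _ g_bound]) auto
  thus ?thesis unfolding Iu_def by (simp add: zero_ereal_def)
qed

lemma Iu_shift: "Iu p T x s = integral {0..real T} (\<lambda>h. \<bar>h - Nr T x s h\<bar> powr p)"
proof -
  have "Iu p T x s = integral {0..real T} (\<lambda>h. \<bar>u_conf T x s - u_conf T x (h + s)\<bar> powr p)"
    unfolding Iu_integral
    by (rule periodic_integral_shift'[OF T0, symmetric]) (simp_all add: u_per[OF T1] g_int)
  also have "\<dots> = integral {0..real T} (\<lambda>h. \<bar>h - Nr T x s h\<bar> powr p)"
    unfolding Nr_def by (simp add: add.commute abs_minus_commute)
  finally show ?thesis .
qed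

lemma Iu_bound: "\<bar>Iu p T x s\<bar> \<le> real T powr p * real T"
  unfolding Iu_integral using integral_abs_bound[OF g_int _ g_bound, of 0 "real T"] by simp

lemma Nr_bound: "\<bar>Nr T x s h\<bar> \<le> real T + \<bar>h\<bar>"
  unfolding Nr_def using u_bound[OF T1, of x s "s + h"] by linarith

lemma Lr_bound: assumes "h \<in> {0..real T}" shows "\<bar>Lr p h (Nr T x s h)\<bar> \<le> 4 * real T + 1"
proof -
  have "0 \<le> \<lfloor>h\<rfloor>" using assms by simp
  hence fl: "0 \<le> (of_int \<lfloor>h\<rfloor> :: real)" "of_int \<lfloor>h\<rfloor> \<le> h" by simp_all
  have b: "\<bar>beta p h\<bar> \<le> 1" by (rule beta_bound[OF p1])
  have f: "\<bar>frac h powr p\<bar> \<le> 1" using frac_powr_bounds[OF p1, of h] by simp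
  have flT: "(of_int \<lfloor>h\<rfloor> :: real) \<le> real T" using of_int_floor_le[of h] assms by (simp only: atLeastAtMost_iff) linarith
  have "\<bar>beta p h * of_int \<lfloor>h\<rfloor>\<bar> \<le> 1 * real T"
    unfolding abs_mult using b fl assms by (intro mult_mono) (use flT in auto)
  moreover have "\<bar>beta p h * Nr T x s h\<bar> \<le> 1 * (2 * real T)"
    unfolding abs_mult using b Nr_bound[of s h] assms by (intro mult_mono) auto
  ultimately show ?thesis using f powr_ge_zero[of "frac h" p] unfolding Lr_def A0_def by (simp only: abs_le_iff) linarith
qed

lemma Lr_meas: "(\<lambda>h. Lr p h (Nr T x s h)) \<in> borel_measurable borel"
  unfolding Lr_def A0_def beta_def Nr_def frac_def by measurable

lemma Lr_int: "(\<lambda>h. Lr p h (Nr T x s h)) integrable_on {0..real T}"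
  by (rule bm_bounded_integrable_on[OF Lr_meas Lr_bound])

lemma Ju_integral: "Ju p T x s = integral {0..real T} (\<lambda>h. Lr p h (Nr T x s h))"
proof -
  have "(LBINT h=ereal 0..ereal (real T). Lr p h (Nr T x s h))
     = integral {0..real T} (\<lambda>h. Lr p h (Nr T x s h))"
    by (rule bm_bounded_LBINT[OF Lr_meas Lr_bound]) auto
  thus ?thesis unfolding Ju_def by (simp add: zero_ereal_def)
qed

lemma Ju_bound: "\<bar>Ju p T x s\<bar> \<le> (4 * real T + 1) * real T"
  unfolding Ju_integral using integral_abs_bound[OF Lr_int _ Lr_bound] by simp

lemma phi_meas: "(\<lambda>h. \<bar>h - Nr T x s h\<bar> powr p) \<in> borel_measurable borel"
  unfolding Nr_def by measurable

lemma phi_int: "(\<lambda>h. \<bar>h - Nr T x s h\<bar> powr p) integrable_on {0..real T}"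
proof -
  have "\<bar>\<bar>h - Nr T x s h\<bar> powr p\<bar> \<le> real T powr p" for h
    unfolding Nr_def using g_bound[of s "s + h"] by (simp add: abs_minus_commute algebra_simps)
  thus ?thesis by (intro bm_bounded_integrable_on[OF phi_meas]) 
qed

lemma Nr_isint: "\<exists>n::int. Nr T x s h = of_int n"
  using Nr_int[of T x s h] by blast

lemma Ju_le_Iu: "Ju p T x s \<le> Iu p T x s"
  unfolding Ju_integral Iu_shift
proof (rule integral_le[OF Lr_int phi_int])
  fix h obtain n where n: "Nr T x s h = of_int n" using Nr_isint by blast
  show "Lr p h (Nr T x s h) \<le> \<bar>h - Nr T x s h\<bar> powr p" unfolding n by (rule Lr_le[OF p1])
qed


lemma A0_bound: assumes "h \<in> {0..real T}" shows "\<bar>A0 p h\<bar> \<le> real T + 1"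
proof -
  have flT: "(of_int \<lfloor>h\<rfloor> :: real) \<le> real T" "0 \<le> (of_int \<lfloor>h\<rfloor> :: real)"
    using of_int_floor_le[of h] assms by (simp_all only: atLeastAtMost_iff) (linarith, simp)
  have b: "\<bar>beta p h\<bar> \<le> 1" by (rule beta_bound[OF p1])
  have "\<bar>beta p h * of_int \<lfloor>h\<rfloor>\<bar> \<le> 1 * real T"
    unfolding abs_mult using b flT by (intro mult_mono) auto
  thus ?thesis using frac_powr_bounds[OF p1, of h] unfolding A0_def by (simp only: abs_le_iff) linarith
qed

lemma A0_int: "A0 p integrable_on {0..real T}"
  by (rule bm_bounded_integrable_on[OF A0_meas A0_bound])

lemma bD_meas: "(\<lambda>h. beta p h * Dfl T r h) \<in> borel_measurable borel"
  unfolding beta_def Dfl_def frac_def by measurable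

lemma bD_bound: assumes "h \<in> {0..real T}" shows "\<bar>beta p h * Dfl T r h\<bar> \<le> 1"
proof -
  have "\<bar>beta p h\<bar> * \<bar>Dfl T r h\<bar> \<le> 1 * 1"
    using beta_bound[OF p1, of h] Dfl_bound[OF T1, of h r] assms by (intro mult_mono) auto
  thus ?thesis by (simp add: abs_mult)
qed

lemma bD_int: "(\<lambda>h. beta p h * Dfl T r h) integrable_on {0..real T}"
  by (rule bm_bounded_integrable_on[OF bD_meas bD_bound])

lemma Phi_integral: "Phi p T r = integral {0..real T} (\<lambda>h. beta p h * Dfl T r h)"
proof -
  have "(LBINT h=ereal 0..ereal (real T). beta p h * Dfl T r h)
     = integral {0..real T} (\<lambda>h. beta p h * Dfl T r h)"
    by (rule bm_bounded_LBINT[OF bD_meas bD_bound]) auto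
  thus ?thesis unfolding Phi_def by (simp add: zero_ereal_def)
qed

lemma Phi_bound: "\<bar>Phi p T r\<bar> \<le> real T"
  unfolding Phi_integral using integral_abs_bound[OF bD_int _ bD_bound] by simp

lemma Phi_per: "Phi p T (r + real T) = Phi p T r"
  unfolding Phi_def using Dfl_per[OF T1] by simp

lemma Phi_int_all: "Phi p T integrable_on {a..b}"
  by (rule bm_bounded_integrable_on[OF Phi_meas Phi_bound])

lemma Ju_decomp: "Ju p T x s = integral {0..real T} (A0 p) + (\<Sum>i<T. Phi p T (s - x i))"
proof -
  have e: "Lr p h (Nr T x s h) = A0 p h + (\<Sum>i<T. beta p h * Dfl T (s - x i) h)" for h
    unfolding Lr_def Nr_sum by (simp add: sum_distrib_left)
  have "Ju p T x s = integral {0..real T} (\<lambda>h. A0 p h + (\<Sum>i<T. beta p h * Dfl T (s - x i) h))"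
    unfolding Ju_integral e ..
  also have "\<dots> = integral {0..real T} (A0 p) + integral {0..real T} (\<lambda>h. \<Sum>i<T. beta p h * Dfl T (s - x i) h)"
    by (rule integral_add[OF A0_int integrable_sum]) (simp_all add: bD_int)
  also have "integral {0..real T} (\<lambda>h. \<Sum>i<T. beta p h * Dfl T (s - x i) h) = (\<Sum>i<T. Phi p T (s - x i))"
    by (subst integral_sum) (simp_all add: bD_int Phi_integral)
  finally show ?thesis .
qed

lemma Ju_int_all: "Ju p T x integrable_on {a..b}"
  by (rule bm_bounded_integrable_on[OF Ju_meas Ju_bound])

lemma Iu_int_all: "Iu p T x integrable_on {a..b}"
  by (rule bm_bounded_integrable_on[OF Iu_meas Iu_bound])

lemma int_Ju: "integral {0..real T} (Ju p T x) = Cst p T"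
proof -
  have sh: "integral {0..real T} (\<lambda>s. Phi p T (s - x i)) = integral {0..real T} (Phi p T)" for i
    using periodic_integral_shift'[OF T0 Phi_per Phi_int_all, of "- x i"] by simp
  have pint: "(\<lambda>s. Phi p T (s - x i)) integrable_on {0..real T}" for i
  proof -
    have "(\<lambda>s. Phi p T (s - x i)) = Phi p T \<circ> (+) (- x i)" by (auto simp: o_def)
    thus ?thesis using integrable_on_shift_Icc_real[of "Phi p T" "- x i" 0 "real T"] Phi_int_all by simp
  qed
  have "integral {0..real T} (Ju p T x)
      = integral {0..real T} (\<lambda>s. integral {0..real T} (A0 p) + (\<Sum>i<T. Phi p T (s - x i)))"
    by (rule arg_cong[where f="integral {0..real T}"], rule ext, rule Ju_decomp)
  also have "\<dots> = real T * integral {0..real T} (A0 p) + (\<Sum>i<T. integral {0..real T} (\<lambda>s. Phi p T (s - x i)))"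
    by (subst integral_add) (auto intro!: integrable_sum pint simp: integral_sum[OF _ pint])
  also have "\<dots> = Cst p T" unfolding sh Cst_def by simp
  finally show ?thesis .
qed

lemma F0_eq: "F0 p T x = integral {0..real T} (Iu p T x)"
proof -
  have "(LBINT s=ereal 0..ereal (real T). Iu p T x s) = integral {0..real T} (Iu p T x)"
    by (rule bm_bounded_LBINT[OF Iu_meas Iu_bound]) auto
  thus ?thesis unfolding F0_def Iu_def by (simp add: zero_ereal_def)
qed

lemma F0_ge: "Cst p T \<le> F0 p T x"
  unfolding F0_eq int_Ju[symmetric]
  by (rule integral_le[OF Ju_int_all Iu_int_all Ju_le_Iu])

lemma F0_minus: "F0 p T x - Cst p T = integral {0..real T} (\<lambda>s. Iu p T x s - Ju p T x s)"
  unfolding F0_eq int_Ju[symmetric] by (rule integral_diff[OF Iu_int_all Ju_int_all, symmetric])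


lemma F0_eq_Cst:
  assumes H: "\<And>s h. \<exists>n. Nr T x s h = of_int n \<and> (n = \<lfloor>h\<rfloor> \<or> n = \<lfloor>h\<rfloor> + 1)"
  shows "F0 p T x = Cst p T"
proof -
  have "Iu p T x s - Ju p T x s = 0" for s
  proof -
    have "Ju p T x s = Iu p T x s"
      unfolding Ju_integral Iu_shift
    proof (rule integral_cong)
      fix h obtain n where n: "Nr T x s h = of_int n" "n = \<lfloor>h\<rfloor> \<or> n = \<lfloor>h\<rfloor> + 1" using H by blast
      show "Lr p h (Nr T x s h) = \<bar>h - Nr T x s h\<bar> powr p" unfolding n(1) by (rule Lr_eq[OF n(2)])
    qed
    thus ?thesis by simp
  qed
  hence "F0 p T x - Cst p T = 0" unfolding F0_minus by simp
  thus ?thesis by simp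
qed

lemma Dfl_ge1: assumes "s < y + of_int k * real T" "y + of_int k * real T \<le> s + h"
  shows "1 \<le> Dfl T (s - y) h"
proof -
  have "(s - y) / real T < of_int k" using assms(1) T0 by (simp add: divide_less_eq algebra_simps)
  hence a: "\<lfloor>(s - y) / real T\<rfloor> < k" by (simp add: floor_less_iff)
  have "of_int k \<le> (s - y + h) / real T" using assms(2) T0 by (simp add: le_divide_eq algebra_simps)
  hence b: "k \<le> \<lfloor>(s - y + h) / real T\<rfloor>" by (simp add: le_floor_iff)
  show ?thesis using a b unfolding Dfl_def by (simp add: algebra_simps)
qed

lemma Iu_per: "Iu p T x (s + real T) = Iu p T x s"
  unfolding Iu_def u_per[OF T1] ..

lemma Ju_per: "Ju p T x (s + real T) = Ju p T x s"
  unfolding Ju_def Nr_per[OF T1] ..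

lemma F0_gt_Cst:
  assumes ij: "i < T" "j < T" "i \<noteq> j"
    and y: "y1 = x i + of_int k1 * real T" "y2 = x j + of_int k2 * real T" "y1 \<le> y2" "y2 < y1 + 1"
  shows "Cst p T < F0 p T x"
proof -
  define d where "d = y2 - y1"
  define e where "e = max d (3/4)"
  define hA where "hA = (e + 1) / 2"
  define hB where "hB = (hA + 1) / 2"
  define del where "del = (hA - d) / 3"
  define sL where "sL = y2 - hA + del"
  define sR where "sR = y1 - del"
  have d: "0 \<le> d" "d < 1" using y by (auto simp: d_def)
  have e: "d \<le> e" "3/4 \<le> e" "e < 1" using d by (auto simp: e_def)
  have hAB: "3/4 \<le> hA" "hA < hB" "hB < 1" "d < hA" using e by (auto simp: hA_def hB_def)
  have del: "0 < del" using hAB by (simp add: del_def)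
  have sLR2: "sR - sL = del" unfolding sL_def sR_def del_def d_def by (simp add: field_simps)
  have sLR: "sL < sR" "sR - sL = del" using sLR2 del by auto
  have Tge: "1 \<le> real T" using T1 by simp
  define G where "G = (\<lambda>s. Iu p T x s - Ju p T x s)"
  have Gint: "G integrable_on {a..b}" for a b
    unfolding G_def by (rule integrable_diff[OF Iu_int_all Ju_int_all])
  have Gnn: "0 \<le> G s" for s unfolding G_def using Ju_le_Iu[of s] by simp
  have Gper: "G (s + real T) = G s" for s unfolding G_def Iu_per Ju_per ..
  define g where "g = (\<lambda>s h. \<bar>h - Nr T x s h\<bar> powr p - Lr p h (Nr T x s h))"
  have gnn: "0 \<le> g s h" for s h
  proof -
    obtain n where n: "Nr T x s h = of_int n" using Nr_isint by blast
    show ?thesis unfolding g_def n using Lr_le[OF p1, of h n] by simp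
  qed
  have gint: "g s integrable_on {0..real T}" for s
    unfolding g_def by (rule integrable_diff[OF phi_int Lr_int])
  have G_eq: "G s = integral {0..real T} (g s)" for s
    unfolding G_def Iu_shift Ju_integral g_def by (rule integral_diff[OF phi_int Lr_int, symmetric])
  have Gbig: "(hB - hA) / 2 \<le> G s" if s: "s \<in> {sL..sR}" for s
  proof -
    have gbig: "1/2 \<le> g s h" if h: "h \<in> {hA..hB}" for h
    proof -
      have "1 \<le> Dfl T (s - x i) h"
        by (rule Dfl_ge1[of s "x i" k1 h]) (use s h hAB y d del in \<open>auto simp: sL_def sR_def d_def\<close>)
      moreover have "1 \<le> Dfl T (s - x j) h"
        by (rule Dfl_ge1[of s "x j" k2 h]) (use s h hAB y d del in \<open>auto simp: sL_def sR_def d_def\<close>)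
      moreover have nn: "0 \<le> Dfl T (s - x l) h" for l
        using Dfl_bound[OF T1, of h] h hAB Tge by auto
      moreover have "(\<Sum>l\<in>{i,j}. Dfl T (s - x l) h) \<le> (\<Sum>l<T. Dfl T (s - x l) h)"
        using ij nn by (intro sum_mono2) auto
      ultimately have N2: "2 \<le> Nr T x s h" unfolding Nr_sum using ij by simp
      obtain n where n: "Nr T x s h = of_int n" using Nr_isint by blast
      have "n \<ge> 2" using N2 n by simp
      from Lr_strict[OF p1 _ _ this, of h] h hAB
      show ?thesis unfolding g_def n by simp
    qed
    have i1: "integral {0..real T} (g s) = integral {0..hA} (g s) + integral {hA..real T} (g s)"
      using hAB Tge gint[of s]
      by (intro Henstock_Kurzweil_Integration.integral_combine[symmetric]) auto
    have i2: "integral {hA..real T} (g s) = integral {hA..hB} (g s) + integral {hB..real T} (g s)"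
      using hAB Tge gint[of s]
      by (intro Henstock_Kurzweil_Integration.integral_combine[symmetric] integrable_subinterval_real[OF gint]) auto
    have n1: "0 \<le> integral {0..hA} (g s)"
      using hAB Tge by (intro integral_nonneg integrable_subinterval_real[OF gint] gnn) auto
    have n2: "0 \<le> integral {hB..real T} (g s)"
      using hAB Tge by (intro integral_nonneg integrable_subinterval_real[OF gint] gnn) auto
    have "integral {hA..hB} (\<lambda>_. 1/2) \<le> integral {hA..hB} (g s)"
      using hAB Tge by (intro integral_le integrable_subinterval_real[OF gint] gbig) auto
    hence n3: "(hB - hA) / 2 \<le> integral {hA..hB} (g s)" using hAB by simp
    show ?thesis unfolding G_eq i1 i2 using n1 n2 n3 by linarith
  qed
  have sRT: "sR \<le> sL + real T" using sLR(2) hAB d Tge unfolding del_def by (simp add: field_simps)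
  have "integral {0..real T} G = integral {sL..sL + real T} G"
    by (rule periodic_integral_shift[OF T0 Gper Gint, symmetric])
  also have "\<dots> = integral {sL..sR} G + integral {sR..sL + real T} G"
    using sLR del Tge hAB d sRT
    by (intro Henstock_Kurzweil_Integration.integral_combine[symmetric] Gint) auto
  finally have split: "integral {0..real T} G = integral {sL..sR} G + integral {sR..sL + real T} G" .
  have "integral {sL..sR} (\<lambda>_. (hB - hA) / 2) \<le> integral {sL..sR} G"
    by (intro integral_le Gint Gbig) auto
  hence m1: "(sR - sL) * ((hB - hA) / 2) \<le> integral {sL..sR} G" using sLR by simp
  have m2: "0 \<le> integral {sR..sL + real T} G" by (intro integral_nonneg Gint Gnn)
  have "0 < (sR - sL) * ((hB - hA) / 2)" using sLR hAB by simp
  hence "0 < integral {0..real T} G" using split m1 m2 by linarith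
  thus ?thesis using F0_minus unfolding G_def by simp
qed

end


lemma int_div_sum:
  assumes T: "T \<ge> 1"
  shows "(\<Sum>i<T. (m - int i) div int T) = m - int T + 1"
proof -
  obtain n where n: "T = Suc n" using T by (cases T) auto
  define S where "S = (\<lambda>m. \<Sum>i<T. (m - int i) div int T)"
  have R: "S (m + 1) = S m + 1" for m
  proof -
    have "S (m + 1) = (m + 1) div int T + (\<Sum>i<n. (m - int i) div int T)"
      unfolding S_def n by (subst sum.lessThan_Suc_shift) (simp add: algebra_simps)
    moreover have "S m = (\<Sum>i<n. (m - int i) div int T) + (m - int n) div int T"
      unfolding S_def n by simp
    moreover have "(m + 1) div int T = (m - int n) div int T + 1"
    proof -
      have e: "m + 1 = (m - int n) + 1 * int T" using n by simp
      have "(m + 1) div int T = ((m - int n) + 1 * int T) div int T" by (subst e) (rule refl)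
      also have "\<dots> = (m - int n) div int T + 1" using T by (subst div_mult_self1) auto
      finally show ?thesis .
    qed
    ultimately show ?thesis by simp
  qed
  have base0: "S (int T - 1) = 0"
    unfolding S_def by (intro sum.neutral ballI) (auto intro!: div_pos_pos_trivial)
  have "S m = m - int T + 1"
  proof (induction m rule: int_induct[where k="int T - 1"])
    case base thus ?case using base0 by simp
  next
    case (step1 i) thus ?case using R[of i] by simp
  next
    case (step2 i) thus ?case using R[of "i - 1"] by simp
  qed
  thus ?thesis unfolding S_def .
qed

lemma floor_sum_hermite:
  assumes T: "T \<ge> 1"
  shows "(\<Sum>i<T. \<lfloor>(y - real i) / real T\<rfloor>) = \<lfloor>y\<rfloor> - int T + 1"
proof -
  have "\<lfloor>(y - real i) / real T\<rfloor> = (\<lfloor>y\<rfloor> - int i) div int T" for i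
  proof -
    have "\<lfloor>(y - real i) / real T\<rfloor> = \<lfloor>(y - real i) / real_of_int (int T)\<rfloor>" by simp
    also have "\<dots> = \<lfloor>y - real i\<rfloor> div int T" by (rule floor_divide_real_eq_div) simp
    also have "\<lfloor>y - real i\<rfloor> = \<lfloor>y\<rfloor> - int i" by (metis floor_diff_of_int of_int_of_nat_eq)
    finally show ?thesis .
  qed
  thus ?thesis using int_div_sum[OF T] by simp
qed

lemma ws_Nr:
  assumes T: "T \<ge> 1" and ws: "\<And>i. i < T \<Longrightarrow> x i = c + real i"
  shows "\<exists>n. Nr T x s h = of_int n \<and> (n = \<lfloor>h\<rfloor> \<or> n = \<lfloor>h\<rfloor> + 1)"
proof -
  have "Nr T x s h = (\<Sum>i<T. Dfl T (s - x i) h)" by (rule Nr_sum)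
  also have "\<dots> = (\<Sum>i<T. real_of_int (\<lfloor>((s - c + h) - real i) / real T\<rfloor> - \<lfloor>((s - c) - real i) / real T\<rfloor>))"
    unfolding Dfl_def by (intro sum.cong refl) (simp add: ws algebra_simps)
  also have "\<dots> = real_of_int ((\<Sum>i<T. \<lfloor>((s - c + h) - real i) / real T\<rfloor>) - (\<Sum>i<T. \<lfloor>((s - c) - real i) / real T\<rfloor>))"
    by (simp add: sum_subtractf)
  also have "\<dots> = real_of_int (\<lfloor>s - c + h\<rfloor> - \<lfloor>s - c\<rfloor>)"
    unfolding floor_sum_hermite[OF T] by simp
  finally have e: "Nr T x s h = real_of_int (\<lfloor>s - c + h\<rfloor> - \<lfloor>s - c\<rfloor>)" .
  have "\<lfloor>s - c + h\<rfloor> - \<lfloor>s - c\<rfloor> = \<lfloor>h\<rfloor> \<or> \<lfloor>s - c + h\<rfloor> - \<lfloor>s - c\<rfloor> = \<lfloor>h\<rfloor> + 1"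
    using floor_add[of "s - c" h] by (auto split: if_splits)
  thus ?thesis using e by blast
qed

lemma eq_config_is: "is_config T eq_config"
  unfolding is_config_def eq_config_def by auto

lemma gaps_ws:
  assumes T: "T \<ge> 1" and cfg: "is_config T x"
    and g: "\<And>i. i + 1 < T \<Longrightarrow> x (i + 1) - x i \<ge> 1"
    and w: "x (T - 1) - x 0 \<le> real T - 1"
  shows "\<And>i. i < T \<Longrightarrow> x i = x 0 + real i"
proof -
  have up: "x (i + k) \<ge> x i + real k" if "i + k < T" for i k
    using that
  proof (induction k)
    case 0 thus ?case by simp
  next
    case (Suc k)
    hence "x (i + k) \<ge> x i + real k" by simp
    moreover have "x (i + k + 1) - x (i + k) \<ge> 1" using g[of "i + k"] Suc.prems by simp
    ultimately show ?case by simp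
  qed
  fix i assume i: "i < T"
  have a: "x i \<ge> x 0 + real i" using up[of 0 i] i by simp
  have "x (i + (T - 1 - i)) \<ge> x i + real (T - 1 - i)" using up[of i "T - 1 - i"] i by simp
  moreover have "i + (T - 1 - i) = T - 1" using i by simp
  moreover have "real (T - 1 - i) = real T - 1 - real i" using i by (simp add: of_nat_diff)
  ultimately have b: "x (T - 1) \<ge> x i + real T - 1 - real i" by simp
  show "x i = x 0 + real i" using a b w by simp
qed



lemma int_pos_ge1: assumes "z = real_of_int m" "z > 0" shows "z \<ge> 1"
  using assms by simp

lemma count_eq_le1:
  assumes T: "T \<ge> 1" shows "conf_count T eq_config z \<le> 1"
proof -
  define E where "E = {(i::nat, k::int). i < T \<and> eq_config i + of_int k * real T = z}"
  have uniq: "a = b" if ha: "a \<in> E" and hb: "b \<in> E" for a b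
  proof -
    obtain i k where a: "a = (i, k)" "i < T" "real i + of_int k * real T = z" using ha by (auto simp: E_def eq_config_def)
    obtain i' k' where b: "b = (i', k')" "i' < T" "real i' + of_int k' * real T = z" using hb by (auto simp: E_def eq_config_def)
    have "real i - real i' = of_int (k' - k) * real T" using a b by (simp add: algebra_simps)
    hence e: "int i - int i' = (k' - k) * int T"
      by (metis of_int_eq_iff of_int_mult of_int_diff of_int_of_nat_eq)
    have "k' = k"
    proof (rule ccontr)
      assume "k' \<noteq> k"
      hence "k' - k \<ge> 1 \<or> k' - k \<le> -1" by linarith
      thus False
      proof
        assume "k' - k \<ge> 1"
        hence "(k' - k) * int T \<ge> 1 * int T" by (intro mult_right_mono) auto
        moreover have "int i < int T" "int i' < int T" "0 \<le> int i" "0 \<le> int i'" using a(2) b(2) by auto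
        ultimately show False using e by linarith
      next
        assume "k' - k \<le> -1"
        hence "(k' - k) * int T \<le> (-1) * int T" by (intro mult_right_mono) auto
        moreover have "int i < int T" "int i' < int T" "0 \<le> int i" "0 \<le> int i'" using a(2) b(2) by auto
        ultimately show False using e by linarith
      qed
    qed
    thus ?thesis using e a b by simp
  qed
  show ?thesis
  proof (cases "finite E")
    case True thus ?thesis using uniq card_le_Suc0_iff_eq[OF True] unfolding conf_count_def E_def[symmetric] by auto
  next
    case False thus ?thesis unfolding conf_count_def E_def[symmetric] by simp
  qed
qed

lemma count_finite:
  assumes T: "T \<ge> 1" shows "finite {(i::nat, k::int). i < T \<and> x i + of_int k * real T = y}"
proof (rule finite_subset)
  show "{(i::nat, k::int). i < T \<and> x i + of_int k * real T = y} \<subseteq> (\<lambda>i. (i, \<lfloor>(y - x i) / real T\<rfloor>)) ` {..<T}"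
  proof
    fix a assume "a \<in> {(i::nat, k::int). i < T \<and> x i + of_int k * real T = y}"
    then obtain i k where a: "a = (i, k)" "i < T" "x i + of_int k * real T = y" by auto
    have "(y - x i) / real T = of_int k" using a(3) T by (simp add: field_simps)
    thus "a \<in> (\<lambda>i. (i, \<lfloor>(y - x i) / real T\<rfloor>)) ` {..<T}" using a by auto
  qed
qed simp

lemma translate_ws:
  assumes T: "T \<ge> 1" and cfg: "is_config T x" and tr: "conf_translate_eq T x eq_config a"
  shows "\<And>i. i < T \<Longrightarrow> x i = x 0 + real i"
proof -
  define X where "X = (\<lambda>y. {(i::nat, k::int). i < T \<and> x i + of_int k * real T = y})"
  have finX: "finite (X y)" for y unfolding X_def by (rule count_finite[OF T])
  have cx: "card (X y) = conf_count T eq_config (y - a)" for y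
  proof -
    have "conf_count T x y = conf_count T eq_config (y - a)" using tr unfolding conf_translate_eq_def by blast
    thus ?thesis unfolding X_def by (simp only: conf_count_def)
  qed
  have le1: "card (X y) \<le> 1" for y
    unfolding cx by (rule count_eq_le1[OF T])
  have intv: "\<exists>m::int. x i - a = of_int m" if i: "i < T" for i
  proof -
    have "(i, 0) \<in> X (x i)" using i by (simp add: X_def)
    hence "card (X (x i)) \<noteq> 0" using finX[of "x i"] by auto
    hence "conf_count T eq_config (x i - a) \<noteq> 0" unfolding cx .
    hence "{(j::nat, k::int). j < T \<and> eq_config j + of_int k * real T = x i - a} \<noteq> {}"
      unfolding conf_count_def by (metis card.empty)
    then obtain i' k' where "i' < T" "real i' + of_int k' * real T = x i - a" by (auto simp: eq_config_def)
    hence "x i - a = of_int (int i' + k' * int T)" by simp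
    thus ?thesis by blast
  qed
  have dist: "x i \<noteq> x j" if "i < T" "j < T" "i \<noteq> j" for i j
  proof
    assume e: "x i = x j"
    have "{(i, 0), (j, 0)} \<subseteq> X (x i)" using that e by (auto simp: X_def)
    hence "card {(i, 0::int), (j, 0)} \<le> card (X (x i))" by (intro card_mono finX)
    thus False using le1[of "x i"] that by simp
  qed
  have intd: "\<exists>m::int. x j - x i = of_int m" if hi: "i < T" and hj: "j < T" for i j
  proof -
    obtain mi where "x i - a = of_int mi" using intv hi by blast
    moreover obtain mj where "x j - a = of_int mj" using intv hj by blast
    ultimately have "x j - x i = of_int (mj - mi)" by simp
    thus ?thesis by blast
  qed
  have g: "x (i + 1) - x i \<ge> 1" if hi: "i + 1 < T" for i
  proof -
    have "x i \<le> x (i + 1)" using cfg hi unfolding is_config_def by auto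
    moreover have "x i \<noteq> x (i + 1)" using dist[of i "i + 1"] hi by simp
    moreover obtain m where "x (i + 1) - x i = of_int m" using intd[of i "i + 1"] hi by auto
    ultimately show ?thesis by (intro int_pos_ge1[of _ m]) auto
  qed
  have w: "x (T - 1) - x 0 \<le> real T - 1"
  proof -
    obtain m where m: "x (T - 1) - x 0 = of_int m" using intd[of 0 "T - 1"] T by auto
    have "x (T - 1) < real T" "0 \<le> x 0" using cfg T unfolding is_config_def by auto
    hence "of_int m < real T" using m by simp
    hence "m < int T" by linarith
    hence "m \<le> int T - 1" by simp
    thus ?thesis using m by simp
  qed
  show "\<And>i. i < T \<Longrightarrow> x i = x 0 + real i" by (rule gaps_ws[OF T cfg g w])
qed

lemma ws_translate:
  assumes ws: "\<And>i. i < T \<Longrightarrow> x i = x 0 + real i"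
  shows "conf_translate_eq T x eq_config (x 0)"
  unfolding conf_translate_eq_def conf_count_def
proof
  fix y
  have "{(i::nat, k::int). i < T \<and> x i + of_int k * real T = y}
      = {(i::nat, k::int). i < T \<and> eq_config i + of_int k * real T = y - x 0}"
  proof (rule set_eqI)
    fix z :: "nat \<times> int"
    obtain i k where z: "z = (i, k)" by (cases z)
    show "z \<in> {(i::nat, k::int). i < T \<and> x i + of_int k * real T = y}
      \<longleftrightarrow> z \<in> {(i::nat, k::int). i < T \<and> eq_config i + of_int k * real T = y - x 0}"
    proof (cases "i < T")
      case True
      have "x i = x 0 + real i" by (rule ws[OF True])
      thus ?thesis unfolding z eq_config_def using True by auto
    next
      case False
      thus ?thesis unfolding z by simp
    qed
  qed
  thus "card {(i::nat, k::int). i < T \<and> x i + of_int k * real T = y}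
      = card {(i::nat, k::int). i < T \<and> eq_config i + of_int k * real T = y - x 0}" by simp
qed

lemma not_ws_gt:
  assumes T: "T \<ge> 1" and p: "p \<ge> 1" and cfg: "is_config T x"
    and nws: "\<not> (\<forall>i<T. x i = x 0 + real i)"
  shows "Cst p T < F0 p T x"
proof (cases "\<forall>i. i + 1 < T \<longrightarrow> x (i + 1) - x i \<ge> 1")
  case True
  have "\<not> (x (T - 1) - x 0 \<le> real T - 1)"
    using gaps_ws[OF T cfg] True nws by blast
  hence w: "x 0 + real T < x (T - 1) + 1" by simp
  have T2: "T \<noteq> 1" using w by auto
  show ?thesis
  proof (rule F0_gt_Cst[OF T p, of "T - 1" 0 "x (T - 1)" x 0 "x 0 + real T" 1])
    show "T - 1 < T" "0 < T" "T - 1 \<noteq> 0" using T T2 by auto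
    show "x (T - 1) = x (T - 1) + real_of_int 0 * real T" by simp
    show "x 0 + real T = x 0 + real_of_int 1 * real T" by simp
    have "x (T - 1) < real T" "0 \<le> x 0" using cfg T unfolding is_config_def by auto
    thus "x (T - 1) \<le> x 0 + real T" by simp
    show "x 0 + real T < x (T - 1) + 1" by (rule w)
  qed
next
  case False
  then obtain i where i: "i + 1 < T" "x (i + 1) - x i < 1" by auto
  show ?thesis
  proof (rule F0_gt_Cst[OF T p, of i "i + 1" "x i" x 0 "x (i + 1)" 0])
    show "i < T" "i + 1 < T" "i \<noteq> i + 1" using i by auto
    show "x i = x i + real_of_int 0 * real T" by simp
    show "x (i + 1) = x (i + 1) + real_of_int 0 * real T" by simp
    show "x i \<le> x (i + 1)" using cfg i unfolding is_config_def by auto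
    show "x (i + 1) < x i + 1" using i by simp
  qed
qed

theorem mainTheorem13:
  fixes p :: real and T :: nat
  assumes "p \<ge> 1" and "T \<ge> 1"
  shows "is_config T eq_config \<and>
    (\<forall>x. is_config T x \<longrightarrow> F0 p T eq_config \<le> F0 p T x) \<and>
    (\<forall>x. is_config T x \<longrightarrow>
       (F0 p T x = F0 p T eq_config \<longleftrightarrow> (\<exists>a. conf_translate_eq T x eq_config a)))"
proof -
  note p = assms(1) and T = assms(2)
  have ws_F0: "F0 p T x = Cst p T" if ws: "\<And>i. i < T \<Longrightarrow> x i = x 0 + real i" for x
    by (rule F0_eq_Cst[OF T p ws_Nr[OF T ws]])
  have Ceq: "F0 p T eq_config = Cst p T"
    by (rule ws_F0) (simp add: eq_config_def)
  show ?thesis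
  proof (intro conjI allI impI)
    show "is_config T eq_config" by (rule eq_config_is)
  next
    fix x show "F0 p T eq_config \<le> F0 p T x" unfolding Ceq by (rule F0_ge[OF T p])
  next
    fix x assume cfg: "is_config T x"
    show "F0 p T x = F0 p T eq_config \<longleftrightarrow> (\<exists>a. conf_translate_eq T x eq_config a)"
    proof
      assume e: "F0 p T x = F0 p T eq_config"
      have "\<forall>i<T. x i = x 0 + real i"
      proof (rule ccontr)
        assume "\<not> (\<forall>i<T. x i = x 0 + real i)"
        from not_ws_gt[OF T p cfg this] e Ceq show False by simp
      qed
      thus "\<exists>a. conf_translate_eq T x eq_config a" using ws_translate by blast
    next
      assume "\<exists>a. conf_translate_eq T x eq_config a"
      then obtain a where "conf_translate_eq T x eq_config a" by blast
      from translate_ws[OF T cfg this] have "F0 p T x = Cst p T" by (rule ws_F0)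
      thus "F0 p T x = F0 p T eq_config" using Ceq by simp
    qed
  qed
qed

end
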